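(* Let $R$ be a commutative ring with identity. Then $R$ is almost complemented if and only if its classical ring of quotients $q(R)$ is almost complemented.
   Context: $\mathfrak{N}(R)$ is the nilradical, $\mathrm{reg}(R)$ the set of regular elements (non-zero-divisors), and $q(R)$ the localization of $R$ at $\mathrm{reg}(R)$. A ring $A$ is complemented if for every $a\in A$ there is $b\in A$ with $ab=0$ and $a+b\in\mathrm{reg}(A)$. $R$ is almost complemented if $R/\mathfrak{N}(R)$ is complemented. *)

theory Defs
  imports "HOL-Algebra.QuotRing"
begin

text \<open>Nilradical, regular elements (non-zero-divisors), complemented and
almost complemented rings, and the classical ring of quotients q(R), i.e. the
localization of R at reg(R), constructed as fractions a/s (s regular) modulo
the relation a/s = b/t iff a t = b s (valid since reg(R) consists of
non-zero-divisors).\<close>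

definition nilradical :: "('a, 'b) ring_scheme \<Rightarrow> 'a set" where
  "nilradical R = {x \<in> carrier R. \<exists>n::nat. x [^]\<^bsub>R\<^esub> n = \<zero>\<^bsub>R\<^esub>}"

definition reg :: "('a, 'b) ring_scheme \<Rightarrow> 'a set" where
  "reg R = {x \<in> carrier R. \<forall>y \<in> carrier R. x \<otimes>\<^bsub>R\<^esub> y = \<zero>\<^bsub>R\<^esub> \<longrightarrow> y = \<zero>\<^bsub>R\<^esub>}"

definition complemented :: "('a, 'b) ring_scheme \<Rightarrow> bool" where
  "complemented A \<longleftrightarrow> (\<forall>a \<in> carrier A. \<exists>b \<in> carrier A.
      a \<otimes>\<^bsub>A\<^esub> b = \<zero>\<^bsub>A\<^esub> \<and> a \<oplus>\<^bsub>A\<^esub> b \<in> reg A)"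

definition almost_complemented :: "('a, 'b) ring_scheme \<Rightarrow> bool" where
  "almost_complemented R \<longleftrightarrow> complemented (R Quot nilradical R)"

definition qrel :: "('a, 'b) ring_scheme \<Rightarrow> (('a \<times> 'a) \<times> ('a \<times> 'a)) set" where
  "qrel R = {((a, s), (b, t)). a \<in> carrier R \<and> s \<in> reg R \<and> b \<in> carrier R \<and> t \<in> reg R
              \<and> a \<otimes>\<^bsub>R\<^esub> t = b \<otimes>\<^bsub>R\<^esub> s}"

definition qclass :: "('a, 'b) ring_scheme \<Rightarrow> 'a \<Rightarrow> 'a \<Rightarrow> ('a \<times> 'a) set" where
  "qclass R a s = qrel R `` {(a, s)}"

definition qmult :: "('a, 'b) ring_scheme \<Rightarrow> ('a \<times> 'a) set \<Rightarrow> ('a \<times> 'a) set \<Rightarrow> ('a \<times> 'a) set" where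
  "qmult R U V = {z. \<exists>a s b t. (a, s) \<in> U \<and> (b, t) \<in> V \<and> z \<in> qclass R (a \<otimes>\<^bsub>R\<^esub> b) (s \<otimes>\<^bsub>R\<^esub> t)}"

definition qadd :: "('a, 'b) ring_scheme \<Rightarrow> ('a \<times> 'a) set \<Rightarrow> ('a \<times> 'a) set \<Rightarrow> ('a \<times> 'a) set" where
  "qadd R U V = {z. \<exists>a s b t. (a, s) \<in> U \<and> (b, t) \<in> V \<and> z \<in> qclass R ((a \<otimes>\<^bsub>R\<^esub> t) \<oplus>\<^bsub>R\<^esub> (b \<otimes>\<^bsub>R\<^esub> s)) (s \<otimes>\<^bsub>R\<^esub> t)}"

definition q :: "('a, 'b) ring_scheme \<Rightarrow> (('a \<times> 'a) set) ring" where
  "q R = \<lparr> carrier = (carrier R \<times> reg R) // qrel R,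
      mult = qmult R,
      one = qclass R \<one>\<^bsub>R\<^esub> \<one>\<^bsub>R\<^esub>,
      zero = qclass R \<zero>\<^bsub>R\<^esub> \<one>\<^bsub>R\<^esub>,
      add = qadd R \<rparr>"

end

theory Submission
  imports Defs
begin

context cring begin

lemma nil_pow_aux:
  fixes k :: nat
  assumes "x \<in> carrier R" "y \<in> carrier R"
  shows "\<And>m n z. m + n = k \<Longrightarrow> z \<in> carrier R \<Longrightarrow> x [^] m \<otimes> z = \<zero> \<Longrightarrow> y [^] n \<otimes> z = \<zero>
     \<Longrightarrow> (x \<oplus> y) [^] k \<otimes> z = \<zero>"
proof (induction k)
  case 0
  then show ?case using assms by simp
next
  case (Suc k m n z)
  show ?case
  proof (cases "m = 0 \<or> n = 0")
    case True
    then have "z = \<zero>" using Suc.prems assms by auto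
    then show ?thesis using assms by simp
  next
    case False
    then obtain m' n' where mn: "m = Suc m'" "n = Suc n'" by (meson not0_implies_Suc)
    have xz: "x \<otimes> z \<in> carrier R" "y \<otimes> z \<in> carrier R" using assms Suc.prems by auto
    have h1: "(x \<oplus> y) [^] k \<otimes> (x \<otimes> z) = \<zero>"
    proof (rule Suc.IH[of m' n])
      show "m' + n = k" using Suc.prems mn by simp
      show "x [^] m' \<otimes> (x \<otimes> z) = \<zero>" using Suc.prems mn assms
        by (simp add: m_assoc)
      have "y [^] n \<otimes> (x \<otimes> z) = x \<otimes> (y [^] n \<otimes> z)" using assms Suc.prems
        by (simp add: m_lcomm)
      then show "y [^] n \<otimes> (x \<otimes> z) = \<zero>" using Suc.prems assms by simp
    qed (use xz in auto)
    have h2: "(x \<oplus> y) [^] k \<otimes> (y \<otimes> z) = \<zero>"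
    proof (rule Suc.IH[of m n'])
      show "m + n' = k" using Suc.prems mn by simp
      show "y [^] n' \<otimes> (y \<otimes> z) = \<zero>" using Suc.prems mn assms
        by (simp add: m_assoc)
      have "x [^] m \<otimes> (y \<otimes> z) = y \<otimes> (x [^] m \<otimes> z)" using assms Suc.prems
        by (simp add: m_lcomm)
      then show "x [^] m \<otimes> (y \<otimes> z) = \<zero>" using Suc.prems assms by simp
    qed (use xz in auto)
    have p: "(x \<oplus> y) [^] k \<in> carrier R" using assms by simp
    have e: "P \<otimes> (x \<oplus> y) \<otimes> z = P \<otimes> (x \<otimes> z) \<oplus> P \<otimes> (y \<otimes> z)" if "P \<in> carrier R" for P
      using that assms Suc.prems by algebra
    have "(x \<oplus> y) [^] Suc k \<otimes> z = (x \<oplus> y) [^] k \<otimes> (x \<otimes> z) \<oplus> (x \<oplus> y) [^] k \<otimes> (y \<otimes> z)"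
      using e[OF p] by simp
    then show ?thesis using h1 h2 by simp
  qed
qed

lemma nil_ideal: "ideal (nilradical R) R"
proof (rule idealI)
  show "ring R" by (rule ring_axioms)
  show "subgroup (nilradical R) (add_monoid R)"
  proof
    show "nilradical R \<subseteq> carrier (add_monoid R)" by (auto simp: nilradical_def)
    show "\<one>\<^bsub>add_monoid R\<^esub> \<in> nilradical R"
      by (auto simp: nilradical_def intro: exI[of _ 1])
    fix x y assume x: "x \<in> nilradical R" and y: "y \<in> nilradical R"
    obtain m :: nat where xc: "x \<in> carrier R" "x [^] m = \<zero>" using x by (auto simp: nilradical_def)
    obtain n :: nat where yc: "y \<in> carrier R" "y [^] n = \<zero>" using y by (auto simp: nilradical_def)
    have "(x \<oplus> y) [^] (m + n) \<otimes> \<one> = \<zero>"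
      by (rule nil_pow_aux) (use xc yc in auto)
    then show "x \<otimes>\<^bsub>add_monoid R\<^esub> y \<in> nilradical R"
      using xc yc by (auto simp: nilradical_def)
    have "(\<ominus> x) [^] m = ((\<ominus> \<one>) \<otimes> x) [^] m"
      using xc by (simp add: l_minus)
    also have "\<dots> = (\<ominus> \<one>) [^] m \<otimes> x [^] m"
      using xc by (intro nat_pow_distrib) auto
    finally have "(\<ominus> x) [^] m = \<zero>" using xc by simp
    then show "inv\<^bsub>add_monoid R\<^esub> x \<in> nilradical R"
      using xc by (auto simp: nilradical_def a_inv_def[symmetric])
  qed
  fix a x assume a: "a \<in> nilradical R" and x: "x \<in> carrier R"
  then obtain m :: nat where ac: "a \<in> carrier R" "a [^] m = \<zero>" by (auto simp: nilradical_def)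
  have "(x \<otimes> a) [^] m = \<zero>" using ac x by (simp add: nat_pow_distrib)
  then show "x \<otimes> a \<in> nilradical R" using ac x by (auto simp: nilradical_def)
  then show "a \<otimes> x \<in> nilradical R" using ac x by (simp add: m_comm)
qed

lemma ac_iff: "almost_complemented R \<longleftrightarrow> (\<forall>a\<in>carrier R. \<exists>b\<in>carrier R. a \<otimes> b \<in> nilradical R \<and>
   (\<forall>y\<in>carrier R. (a \<oplus> b) \<otimes> y \<in> nilradical R \<longrightarrow> y \<in> nilradical R))"
proof -
  interpret N: ideal "nilradical R" R by (rule nil_ideal)
  define N where "N = nilradical R"
  define F where "F = R Quot N"
  have carrF: "carrier F = {N +> a | a. a \<in> carrier R}"
    by (auto simp: F_def FactRing_def A_RCOSETS_def RCOSETS_def a_r_coset_def[symmetric])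
  have mulF: "(N +> a) \<otimes>\<^bsub>F\<^esub> (N +> b) = N +> (a \<otimes> b)" if "a \<in> carrier R" "b \<in> carrier R" for a b
    using that by (simp add: F_def N_def FactRing_def N.rcoset_mult_add)
  have addF: "(N +> a) \<oplus>\<^bsub>F\<^esub> (N +> b) = N +> (a \<oplus> b)" if "a \<in> carrier R" "b \<in> carrier R" for a b
    using that by (simp add: F_def N_def FactRing_def N.a_rcos_sum)
  have zeroF: "\<zero>\<^bsub>F\<^esub> = N" by (simp add: F_def FactRing_def)
  have eqz: "N +> x = N \<longleftrightarrow> x \<in> N" if "x \<in> carrier R" for x
    using that N.a_rcos_const N.rcos_const_imp_mem unfolding N_def by blast
  have regF: "N +> c \<in> reg F \<longleftrightarrow> (\<forall>y\<in>carrier R. c \<otimes> y \<in> N \<longrightarrow> y \<in> N)" if c: "c \<in> carrier R" for c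
  proof -
    have "N +> c \<in> reg F \<longleftrightarrow> (\<forall>Y\<in>carrier F. (N +> c) \<otimes>\<^bsub>F\<^esub> Y = N \<longrightarrow> Y = N)"
      using c carrF zeroF by (auto simp: reg_def)
    also have "\<dots> \<longleftrightarrow> (\<forall>y\<in>carrier R. N +> (c \<otimes> y) = N \<longrightarrow> N +> y = N)"
      using c carrF mulF by auto
    also have "\<dots> \<longleftrightarrow> (\<forall>y\<in>carrier R. c \<otimes> y \<in> N \<longrightarrow> y \<in> N)"
      using c eqz by auto
    finally show ?thesis .
  qed
  have "almost_complemented R \<longleftrightarrow> (\<forall>A\<in>carrier F. \<exists>B\<in>carrier F. A \<otimes>\<^bsub>F\<^esub> B = N \<and> A \<oplus>\<^bsub>F\<^esub> B \<in> reg F)"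
    unfolding almost_complemented_def complemented_def F_def N_def by (simp add: FactRing_def)
  also have "\<dots> \<longleftrightarrow> (\<forall>a\<in>carrier R. \<exists>b\<in>carrier R. N +> (a \<otimes> b) = N \<and> N +> (a \<oplus> b) \<in> reg F)"
  proof
    assume H: "\<forall>A\<in>carrier F. \<exists>B\<in>carrier F. A \<otimes>\<^bsub>F\<^esub> B = N \<and> A \<oplus>\<^bsub>F\<^esub> B \<in> reg F"
    show "\<forall>a\<in>carrier R. \<exists>b\<in>carrier R. N +> (a \<otimes> b) = N \<and> N +> (a \<oplus> b) \<in> reg F"
    proof
      fix a assume a: "a \<in> carrier R"
      then have "N +> a \<in> carrier F" using carrF by auto
      then obtain B where B: "B \<in> carrier F" "(N +> a) \<otimes>\<^bsub>F\<^esub> B = N" "(N +> a) \<oplus>\<^bsub>F\<^esub> B \<in> reg F"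
        using H by blast
      then obtain b where b: "b \<in> carrier R" "B = N +> b" using carrF by auto
      show "\<exists>b\<in>carrier R. N +> (a \<otimes> b) = N \<and> N +> (a \<oplus> b) \<in> reg F"
        using B b a mulF addF by auto
    qed
  next
    assume H: "\<forall>a\<in>carrier R. \<exists>b\<in>carrier R. N +> (a \<otimes> b) = N \<and> N +> (a \<oplus> b) \<in> reg F"
    show "\<forall>A\<in>carrier F. \<exists>B\<in>carrier F. A \<otimes>\<^bsub>F\<^esub> B = N \<and> A \<oplus>\<^bsub>F\<^esub> B \<in> reg F"
    proof
      fix A assume "A \<in> carrier F"
      then obtain a where a: "a \<in> carrier R" "A = N +> a" using carrF by auto
      then obtain b where b: "b \<in> carrier R" "N +> (a \<otimes> b) = N" "N +> (a \<oplus> b) \<in> reg F"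
        using H by blast
      have "N +> b \<in> carrier F" using carrF b by auto
      then show "\<exists>B\<in>carrier F. A \<otimes>\<^bsub>F\<^esub> B = N \<and> A \<oplus>\<^bsub>F\<^esub> B \<in> reg F"
        using a b mulF addF by (intro bexI[of _ "N +> b"]) auto
    qed
  qed
  also have "\<dots> \<longleftrightarrow> (\<forall>a\<in>carrier R. \<exists>b\<in>carrier R. a \<otimes> b \<in> N \<and> (\<forall>y\<in>carrier R. (a \<oplus> b) \<otimes> y \<in> N \<longrightarrow> y \<in> N))"
    using eqz regF by (intro ball_cong bex_cong refl) auto
  finally show ?thesis unfolding N_def .
qed

lemma reg_carr: "s \<in> reg R \<Longrightarrow> s \<in> carrier R"
  by (simp add: reg_def)

lemma one_reg: "\<one> \<in> reg R"
  by (simp add: reg_def)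

lemma reg_mult: assumes s: "s \<in> reg R" and t: "t \<in> reg R" shows "s \<otimes> t \<in> reg R"
proof -
  have sc: "s \<in> carrier R" "t \<in> carrier R" using s t by (auto simp: reg_def)
  have s': "\<And>y. y \<in> carrier R \<Longrightarrow> s \<otimes> y = \<zero> \<Longrightarrow> y = \<zero>" using s unfolding reg_def by blast
  have t': "\<And>y. y \<in> carrier R \<Longrightarrow> t \<otimes> y = \<zero> \<Longrightarrow> y = \<zero>" using t unfolding reg_def by blast
  show ?thesis unfolding reg_def
  proof (intro CollectI conjI ballI impI)
    show "s \<otimes> t \<in> carrier R" using sc by simp
    fix y assume y: "y \<in> carrier R" "s \<otimes> t \<otimes> y = \<zero>"
    have "s \<otimes> (t \<otimes> y) = \<zero>" using sc y by (simp add: m_assoc[symmetric])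
    then have "t \<otimes> y = \<zero>" using s' sc y by blast
    then show "y = \<zero>" using t' y by blast
  qed
qed

lemma reg_cancel:
  assumes s: "s \<in> reg R" and a: "a \<in> carrier R" and b: "b \<in> carrier R" and e: "s \<otimes> a = s \<otimes> b"
  shows "a = b"
proof -
  have sc: "s \<in> carrier R" using s by (simp add: reg_def)
  have "s \<otimes> (a \<ominus> b) = s \<otimes> a \<ominus> s \<otimes> b" using sc a b by algebra
  also have "\<dots> = \<zero>" using e sc b by (simp add: minus_eq r_neg)
  finally have z: "a \<ominus> b = \<zero>" using s a b unfolding reg_def by blast
  have "a = (a \<ominus> b) \<oplus> b" using a b by algebra
  also have "\<dots> = b" using z b by simp
  finally show ?thesis .
qed

lemma equiv_qrel: "equiv (carrier R \<times> reg R) (qrel R)"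
proof (rule equivI)
  show "qrel R \<subseteq> (carrier R \<times> reg R) \<times> (carrier R \<times> reg R)"
    unfolding qrel_def by auto
  show "refl_on (carrier R \<times> reg R) (qrel R)"
    unfolding refl_on_def qrel_def by auto
  show "sym (qrel R)"
    unfolding sym_def qrel_def by auto
  show "trans (qrel R)"
  proof (rule transI)
    fix x y z assume xy: "(x, y) \<in> qrel R" and yz: "(y, z) \<in> qrel R"
    obtain a s where x: "x = (a, s)" by (cases x)
    obtain b t where y: "y = (b, t)" by (cases y)
    obtain c u where z: "z = (c, u)" by (cases z)
    have h: "a \<in> carrier R" "s \<in> reg R" "b \<in> carrier R" "t \<in> reg R" "c \<in> carrier R" "u \<in> reg R"
      "a \<otimes> t = b \<otimes> s" "b \<otimes> u = c \<otimes> t"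
    proof -
      have "((a, s), (b, t)) \<in> qrel R" "((b, t), (c, u)) \<in> qrel R" using xy yz x y z by simp_all
      then show "a \<in> carrier R" "s \<in> reg R" "b \<in> carrier R" "t \<in> reg R" "c \<in> carrier R" "u \<in> reg R"
        "a \<otimes> t = b \<otimes> s" "b \<otimes> u = c \<otimes> t" by (simp_all add: qrel_def)
    qed
    note c = h(1,3,5) reg_carr[OF h(2)] reg_carr[OF h(4)] reg_carr[OF h(6)]
    have "t \<otimes> (a \<otimes> u) = (a \<otimes> t) \<otimes> u" using c by algebra
    also have "\<dots> = (b \<otimes> s) \<otimes> u" using h(7) by simp
    also have "\<dots> = s \<otimes> (b \<otimes> u)" using c by algebra
    also have "\<dots> = s \<otimes> (c \<otimes> t)" using h(8) by simp
    also have "\<dots> = t \<otimes> (c \<otimes> s)" using c by algebra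
    finally have eq: "t \<otimes> (a \<otimes> u) = t \<otimes> (c \<otimes> s)" .
    have cc: "a \<otimes> u \<in> carrier R" "c \<otimes> s \<in> carrier R" using c by simp_all
    have "a \<otimes> u = c \<otimes> s" by (rule reg_cancel[OF h(4) cc eq])
    then show "(x, z) \<in> qrel R" unfolding x z qrel_def using h(1,2,5,6) by blast
  qed
qed

lemma mem_qclass: "(b, t) \<in> qclass R a s \<longleftrightarrow> ((a, s), (b, t)) \<in> qrel R"
  by (simp add: qclass_def)

lemma qclass_eq:
  assumes "a \<in> carrier R" "s \<in> reg R" "b \<in> carrier R" "t \<in> reg R"
  shows "qclass R a s = qclass R b t \<longleftrightarrow> a \<otimes> t = b \<otimes> s"
proof -
  have "qclass R a s = qclass R b t \<longleftrightarrow> ((a, s), (b, t)) \<in> qrel R"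
    unfolding qclass_def using assms by (intro eq_equiv_class_iff[OF equiv_qrel]) auto
  also have "\<dots> \<longleftrightarrow> a \<otimes> t = b \<otimes> s" using assms by (simp add: qrel_def)
  finally show ?thesis .
qed

lemma carrier_q: "carrier (q R) = {qclass R a s | a s. a \<in> carrier R \<and> s \<in> reg R}"
  by (auto simp: q_def quotient_def qclass_def)

lemma qclass_in: "a \<in> carrier R \<Longrightarrow> s \<in> reg R \<Longrightarrow> qclass R a s \<in> carrier (q R)"
  by (auto simp: carrier_q)

lemma q_elim:
  assumes "X \<in> carrier (q R)"
  obtains a s where "a \<in> carrier R" "s \<in> reg R" "X = qclass R a s"
  using assms by (auto simp: carrier_q)

lemma qclass_self: "a \<in> carrier R \<Longrightarrow> s \<in> reg R \<Longrightarrow> (a, s) \<in> qclass R a s"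
  by (simp add: qclass_def qrel_def reg_carr)

lemma qclass_memD:
  assumes "(b, t) \<in> qclass R a s"
  shows "a \<in> carrier R" "s \<in> reg R" "b \<in> carrier R" "t \<in> reg R" "a \<otimes> t = b \<otimes> s"
  using assms by (auto simp: qclass_def qrel_def)

lemma qmult_class:
  assumes a: "a \<in> carrier R" and s: "s \<in> reg R" and b: "b \<in> carrier R" and t: "t \<in> reg R"
  shows "qmult R (qclass R a s) (qclass R b t) = qclass R (a \<otimes> b) (s \<otimes> t)"
proof -
  have key: "qclass R (a' \<otimes> b') (s' \<otimes> t') = qclass R (a \<otimes> b) (s \<otimes> t)"
    if h1: "(a', s') \<in> qclass R a s" and h2: "(b', t') \<in> qclass R b t" for a' s' b' t'
  proof -
    note d1 = qclass_memD[OF h1] and d2 = qclass_memD[OF h2]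
    note c = a b reg_carr[OF s] reg_carr[OF t] d1(3) d2(3) reg_carr[OF d1(4)] reg_carr[OF d2(4)]
    have "(a' \<otimes> b') \<otimes> (s \<otimes> t) = (a' \<otimes> s) \<otimes> (b' \<otimes> t)" using c by algebra
    also have "\<dots> = (a \<otimes> s') \<otimes> (b \<otimes> t')" using d1(5) d2(5) by simp
    also have "\<dots> = (a \<otimes> b) \<otimes> (s' \<otimes> t')" using c by algebra
    moreover have "a' \<otimes> b' \<in> carrier R" "a \<otimes> b \<in> carrier R" using c by auto
    moreover have "s' \<otimes> t' \<in> reg R" "s \<otimes> t \<in> reg R" using reg_mult[OF d1(4) d2(4)] reg_mult[OF s t] by auto
    ultimately show ?thesis by (simp add: qclass_eq)
  qed
  show ?thesis
  proof (intro equalityI subsetI)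
    fix z assume "z \<in> qmult R (qclass R a s) (qclass R b t)"
    then obtain a' s' b' t' where h: "(a', s') \<in> qclass R a s" "(b', t') \<in> qclass R b t"
      "z \<in> qclass R (a' \<otimes> b') (s' \<otimes> t')" unfolding qmult_def by blast
    show "z \<in> qclass R (a \<otimes> b) (s \<otimes> t)" using h(3) key[OF h(1) h(2)] by simp
  next
    fix z assume z: "z \<in> qclass R (a \<otimes> b) (s \<otimes> t)"
    show "z \<in> qmult R (qclass R a s) (qclass R b t)" unfolding qmult_def
      using qclass_self[OF a s] qclass_self[OF b t] z by blast
  qed
qed

lemma qadd_class:
  assumes a: "a \<in> carrier R" and s: "s \<in> reg R" and b: "b \<in> carrier R" and t: "t \<in> reg R"
  shows "qadd R (qclass R a s) (qclass R b t) = qclass R (a \<otimes> t \<oplus> b \<otimes> s) (s \<otimes> t)"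
proof -
  have key: "qclass R (a' \<otimes> t' \<oplus> b' \<otimes> s') (s' \<otimes> t') = qclass R (a \<otimes> t \<oplus> b \<otimes> s) (s \<otimes> t)"
    if h1: "(a', s') \<in> qclass R a s" and h2: "(b', t') \<in> qclass R b t" for a' s' b' t'
  proof -
    note d1 = qclass_memD[OF h1] and d2 = qclass_memD[OF h2]
    note c = a b reg_carr[OF s] reg_carr[OF t] d1(3) d2(3) reg_carr[OF d1(4)] reg_carr[OF d2(4)]
    have "(a' \<otimes> t' \<oplus> b' \<otimes> s') \<otimes> (s \<otimes> t) = (a' \<otimes> s) \<otimes> (t \<otimes> t') \<oplus> (b' \<otimes> t) \<otimes> (s \<otimes> s')" using c by algebra
    also have "\<dots> = (a \<otimes> s') \<otimes> (t \<otimes> t') \<oplus> (b \<otimes> t') \<otimes> (s \<otimes> s')" using d1(5) d2(5) by simp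
    also have "\<dots> = (a \<otimes> t \<oplus> b \<otimes> s) \<otimes> (s' \<otimes> t')" using c by algebra
    moreover have "a' \<otimes> t' \<oplus> b' \<otimes> s' \<in> carrier R" "a \<otimes> t \<oplus> b \<otimes> s \<in> carrier R" using c by auto
    moreover have "s' \<otimes> t' \<in> reg R" "s \<otimes> t \<in> reg R" using reg_mult[OF d1(4) d2(4)] reg_mult[OF s t] by auto
    ultimately show ?thesis by (simp add: qclass_eq)
  qed
  show ?thesis
  proof (intro equalityI subsetI)
    fix z assume "z \<in> qadd R (qclass R a s) (qclass R b t)"
    then obtain a' s' b' t' where h: "(a', s') \<in> qclass R a s" "(b', t') \<in> qclass R b t"
      "z \<in> qclass R (a' \<otimes> t' \<oplus> b' \<otimes> s') (s' \<otimes> t')" unfolding qadd_def by blast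
    show "z \<in> qclass R (a \<otimes> t \<oplus> b \<otimes> s) (s \<otimes> t)" using h(3) key[OF h(1) h(2)] by simp
  next
    fix z assume z: "z \<in> qclass R (a \<otimes> t \<oplus> b \<otimes> s) (s \<otimes> t)"
    show "z \<in> qadd R (qclass R a s) (qclass R b t)" unfolding qadd_def
      using qclass_self[OF a s] qclass_self[OF b t] z by blast
  qed
qed

lemma q_simps:
  "X \<otimes>\<^bsub>q R\<^esub> Y = qmult R X Y" "X \<oplus>\<^bsub>q R\<^esub> Y = qadd R X Y"
  "\<one>\<^bsub>q R\<^esub> = qclass R \<one> \<one>" "\<zero>\<^bsub>q R\<^esub> = qclass R \<zero> \<one>"
  by (simp_all add: q_def)

lemma q_cring: "cring (q R)"
proof -
  note [simp] = q_simps qmult_class qadd_class qclass_in reg_mult reg_carr one_reg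
  have ag: "abelian_group (q R)"
  proof (rule abelian_groupI)
    fix X Y assume X: "X \<in> carrier (q R)" and Y: "Y \<in> carrier (q R)"
    obtain a s where a: "a \<in> carrier R" "s \<in> reg R" "X = qclass R a s" using X by (rule q_elim)
    obtain b t where b: "b \<in> carrier R" "t \<in> reg R" "Y = qclass R b t" using Y by (rule q_elim)
    show "X \<oplus>\<^bsub>q R\<^esub> Y \<in> carrier (q R)" using a b by simp
    have "a \<otimes> t \<oplus> b \<otimes> s = b \<otimes> s \<oplus> a \<otimes> t" using a b by (simp add: a_comm)
    moreover have "s \<otimes> t = t \<otimes> s" using a b by (simp add: m_comm)
    ultimately show "X \<oplus>\<^bsub>q R\<^esub> Y = Y \<oplus>\<^bsub>q R\<^esub> X" using a b by simp
  next
    show "\<zero>\<^bsub>q R\<^esub> \<in> carrier (q R)" by simp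
  next
    fix X Y Z assume X: "X \<in> carrier (q R)" and Y: "Y \<in> carrier (q R)" and Z: "Z \<in> carrier (q R)"
    obtain a s where a: "a \<in> carrier R" "s \<in> reg R" "X = qclass R a s" using X by (rule q_elim)
    obtain b t where b: "b \<in> carrier R" "t \<in> reg R" "Y = qclass R b t" using Y by (rule q_elim)
    obtain c u where c: "c \<in> carrier R" "u \<in> reg R" "Z = qclass R c u" using Z by (rule q_elim)
    have cc: "s \<in> carrier R" "t \<in> carrier R" "u \<in> carrier R" using a b c by simp_all
    have e1: "(a \<otimes> t \<oplus> b \<otimes> s) \<otimes> u \<oplus> c \<otimes> (s \<otimes> t) = a \<otimes> (t \<otimes> u) \<oplus> (b \<otimes> u \<oplus> c \<otimes> t) \<otimes> s"
      using a b c cc by algebra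
    have e2: "s \<otimes> t \<otimes> u = s \<otimes> (t \<otimes> u)" using cc by (simp add: m_assoc)
    show "X \<oplus>\<^bsub>q R\<^esub> Y \<oplus>\<^bsub>q R\<^esub> Z = X \<oplus>\<^bsub>q R\<^esub> (Y \<oplus>\<^bsub>q R\<^esub> Z)"
      using a b c by (simp add: e1 e2)
  next
    fix X assume X: "X \<in> carrier (q R)"
    obtain a s where a: "a \<in> carrier R" "s \<in> reg R" "X = qclass R a s" using X by (rule q_elim)
    show "\<zero>\<^bsub>q R\<^esub> \<oplus>\<^bsub>q R\<^esub> X = X" using a by simp
    have "qclass R (\<ominus> a) s \<oplus>\<^bsub>q R\<^esub> X = qclass R (\<ominus> a \<otimes> s \<oplus> a \<otimes> s) (s \<otimes> s)"
      using a by simp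
    also have "\<dots> = qclass R \<zero> \<one>"
    proof (subst qclass_eq)
      show "(\<ominus> a \<otimes> s \<oplus> a \<otimes> s) \<otimes> \<one> = \<zero> \<otimes> (s \<otimes> s)"
        using a reg_carr[OF a(2)] by algebra
    qed (use a in simp_all)
    finally show "\<exists>Y\<in>carrier (q R). Y \<oplus>\<^bsub>q R\<^esub> X = \<zero>\<^bsub>q R\<^esub>"
      using a by (intro bexI[of _ "qclass R (\<ominus> a) s"]) simp_all
  qed
  have cm: "comm_monoid (q R)"
  proof (rule comm_monoidI)
    fix X Y assume X: "X \<in> carrier (q R)" and Y: "Y \<in> carrier (q R)"
    obtain a s where a: "a \<in> carrier R" "s \<in> reg R" "X = qclass R a s" using X by (rule q_elim)
    obtain b t where b: "b \<in> carrier R" "t \<in> reg R" "Y = qclass R b t" using Y by (rule q_elim)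
    show "X \<otimes>\<^bsub>q R\<^esub> Y \<in> carrier (q R)" using a b by simp
    have "a \<otimes> b = b \<otimes> a" using a b by (simp add: m_comm)
    moreover have "s \<otimes> t = t \<otimes> s" using a b by (simp add: m_comm)
    ultimately show "X \<otimes>\<^bsub>q R\<^esub> Y = Y \<otimes>\<^bsub>q R\<^esub> X" using a b by simp
  next
    show "\<one>\<^bsub>q R\<^esub> \<in> carrier (q R)" by simp
  next
    fix X Y Z assume X: "X \<in> carrier (q R)" and Y: "Y \<in> carrier (q R)" and Z: "Z \<in> carrier (q R)"
    obtain a s where a: "a \<in> carrier R" "s \<in> reg R" "X = qclass R a s" using X by (rule q_elim)
    obtain b t where b: "b \<in> carrier R" "t \<in> reg R" "Y = qclass R b t" using Y by (rule q_elim)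
    obtain c u where c: "c \<in> carrier R" "u \<in> reg R" "Z = qclass R c u" using Z by (rule q_elim)
    have cc: "s \<in> carrier R" "t \<in> carrier R" "u \<in> carrier R" using a b c by simp_all
    show "X \<otimes>\<^bsub>q R\<^esub> Y \<otimes>\<^bsub>q R\<^esub> Z = X \<otimes>\<^bsub>q R\<^esub> (Y \<otimes>\<^bsub>q R\<^esub> Z)"
      using a b c cc by (simp add: m_assoc)
  next
    fix X assume X: "X \<in> carrier (q R)"
    obtain a s where a: "a \<in> carrier R" "s \<in> reg R" "X = qclass R a s" using X by (rule q_elim)
    show "\<one>\<^bsub>q R\<^esub> \<otimes>\<^bsub>q R\<^esub> X = X" using a by simp
  qed
  show ?thesis
  proof (rule cringI[OF ag cm])
  fix X Y Z assume X: "X \<in> carrier (q R)" and Y: "Y \<in> carrier (q R)" and Z: "Z \<in> carrier (q R)"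
  obtain a s where a: "a \<in> carrier R" "s \<in> reg R" "X = qclass R a s" using X by (rule q_elim)
  obtain b t where b: "b \<in> carrier R" "t \<in> reg R" "Y = qclass R b t" using Y by (rule q_elim)
  obtain c u where c: "c \<in> carrier R" "u \<in> reg R" "Z = qclass R c u" using Z by (rule q_elim)
  have cc: "s \<in> carrier R" "t \<in> carrier R" "u \<in> carrier R" using a b c by simp_all
  have "(X \<oplus>\<^bsub>q R\<^esub> Y) \<otimes>\<^bsub>q R\<^esub> Z = qclass R ((a \<otimes> t \<oplus> b \<otimes> s) \<otimes> c) (s \<otimes> t \<otimes> u)"
    using a b c by simp
  also have "\<dots> = qclass R (a \<otimes> c \<otimes> (t \<otimes> u) \<oplus> b \<otimes> c \<otimes> (s \<otimes> u)) (s \<otimes> u \<otimes> (t \<otimes> u))"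
  proof (subst qclass_eq)
    show "(a \<otimes> t \<oplus> b \<otimes> s) \<otimes> c \<otimes> (s \<otimes> u \<otimes> (t \<otimes> u)) = (a \<otimes> c \<otimes> (t \<otimes> u) \<oplus> b \<otimes> c \<otimes> (s \<otimes> u)) \<otimes> (s \<otimes> t \<otimes> u)"
      using a b c cc by algebra
  qed (use a b c in simp_all)
  also have "\<dots> = X \<otimes>\<^bsub>q R\<^esub> Z \<oplus>\<^bsub>q R\<^esub> Y \<otimes>\<^bsub>q R\<^esub> Z" using a b c by simp
  finally show "(X \<oplus>\<^bsub>q R\<^esub> Y) \<otimes>\<^bsub>q R\<^esub> Z = X \<otimes>\<^bsub>q R\<^esub> Z \<oplus>\<^bsub>q R\<^esub> Y \<otimes>\<^bsub>q R\<^esub> Z" .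
  qed
qed

lemma reg_pow: "s \<in> reg R \<Longrightarrow> s [^] (n::nat) \<in> reg R"
  by (induction n) (simp_all add: one_reg reg_mult)

lemma q_pow:
  assumes a: "a \<in> carrier R" and s: "s \<in> reg R"
  shows "qclass R a s [^]\<^bsub>q R\<^esub> (n::nat) = qclass R (a [^] n) (s [^] n)"
proof (induction n)
  case 0
  then show ?case by (simp add: q_simps)
next
  case (Suc n)
  then show ?case using a s by (simp add: q_simps qmult_class reg_pow)
qed

lemma q_zero_iff:
  assumes a: "a \<in> carrier R" and s: "s \<in> reg R"
  shows "qclass R a s = qclass R \<zero> \<one> \<longleftrightarrow> a = \<zero>"
  using a s by (simp add: qclass_eq one_reg reg_carr)

lemma nil_q:
  assumes a: "a \<in> carrier R" and s: "s \<in> reg R"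
  shows "qclass R a s \<in> nilradical (q R) \<longleftrightarrow> a \<in> nilradical R"
proof -
  have "qclass R a s \<in> nilradical (q R) \<longleftrightarrow> (\<exists>n::nat. qclass R (a [^] n) (s [^] n) = qclass R \<zero> \<one>)"
    unfolding nilradical_def using a s by (simp add: qclass_in q_pow q_simps)
  also have "\<dots> \<longleftrightarrow> (\<exists>n::nat. a [^] n = \<zero>)"
    using a s by (simp add: q_zero_iff reg_pow)
  finally show ?thesis using a by (simp add: nilradical_def)
qed

lemma reg_nil_cancel:
  assumes s: "s \<in> reg R" and x: "x \<in> carrier R" and sx: "s \<otimes> x \<in> nilradical R"
  shows "x \<in> nilradical R"
proof -
  obtain n :: nat where n: "(s \<otimes> x) [^] n = \<zero>" using sx by (auto simp: nilradical_def)
  have sn: "s [^] n \<in> reg R" using s by (rule reg_pow)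
  have "s [^] n \<otimes> x [^] n = \<zero>" using n s x by (simp add: nat_pow_distrib reg_carr)
  then have "x [^] n = \<zero>" using sn x unfolding reg_def by blast
  then show ?thesis using x by (auto simp: nilradical_def)
qed

lemma nil_sq:
  assumes z: "z \<in> carrier R" and zz: "z \<otimes> z \<in> nilradical R"
  shows "z \<in> nilradical R"
proof -
  obtain n :: nat where n: "(z \<otimes> z) [^] n = \<zero>" using zz by (auto simp: nilradical_def)
  have "z [^] (n + n) = \<zero>" using n z by (simp add: nat_pow_distrib nat_pow_mult[symmetric])
  then show ?thesis using z by (auto simp: nilradical_def)
qed

lemma nil_minus:
  assumes "x \<in> nilradical R" "y \<in> nilradical R"
  shows "x \<ominus> y \<in> nilradical R"
proof -
  interpret N: ideal "nilradical R" R by (rule nil_ideal)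
  show ?thesis using assms by (simp add: minus_eq N.a_closed N.a_inv_closed)
qed

lemma main_aux: "almost_complemented R \<longleftrightarrow> almost_complemented (q R)"
proof -
  interpret Q: cring "q R" by (rule q_cring)
  interpret N: ideal "nilradical R" R by (rule nil_ideal)
  note [simp] = q_simps qmult_class qadd_class qclass_in reg_mult reg_carr one_reg nil_q
  show ?thesis unfolding ac_iff Q.ac_iff
  proof
    assume H: "\<forall>a\<in>carrier R. \<exists>b\<in>carrier R. a \<otimes> b \<in> nilradical R \<and>
      (\<forall>y\<in>carrier R. (a \<oplus> b) \<otimes> y \<in> nilradical R \<longrightarrow> y \<in> nilradical R)"
    show "\<forall>X\<in>carrier (q R). \<exists>Y\<in>carrier (q R). X \<otimes>\<^bsub>q R\<^esub> Y \<in> nilradical (q R) \<and>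
      (\<forall>Z\<in>carrier (q R). (X \<oplus>\<^bsub>q R\<^esub> Y) \<otimes>\<^bsub>q R\<^esub> Z \<in> nilradical (q R) \<longrightarrow> Z \<in> nilradical (q R))"
    proof
      fix X assume X: "X \<in> carrier (q R)"
      obtain a s where a: "a \<in> carrier R" "s \<in> reg R" "X = qclass R a s" using X by (rule q_elim)
      obtain b where b: "b \<in> carrier R" "a \<otimes> b \<in> nilradical R"
        "\<And>y. y \<in> carrier R \<Longrightarrow> (a \<oplus> b) \<otimes> y \<in> nilradical R \<Longrightarrow> y \<in> nilradical R"
        using H a(1) by blast
      have sc: "s \<in> carrier R" using a by simp
      show "\<exists>Y\<in>carrier (q R). X \<otimes>\<^bsub>q R\<^esub> Y \<in> nilradical (q R) \<and>
        (\<forall>Z\<in>carrier (q R). (X \<oplus>\<^bsub>q R\<^esub> Y) \<otimes>\<^bsub>q R\<^esub> Z \<in> nilradical (q R) \<longrightarrow> Z \<in> nilradical (q R))"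
      proof (intro bexI[of _ "qclass R b s"] conjI ballI impI)
        show "qclass R b s \<in> carrier (q R)" using a b(1,2) by simp
        show "X \<otimes>\<^bsub>q R\<^esub> qclass R b s \<in> nilradical (q R)" using a b(1,2) by simp
        fix Z assume Z: "Z \<in> carrier (q R)"
          and HZ: "(X \<oplus>\<^bsub>q R\<^esub> qclass R b s) \<otimes>\<^bsub>q R\<^esub> Z \<in> nilradical (q R)"
        obtain y t where y: "y \<in> carrier R" "t \<in> reg R" "Z = qclass R y t" using Z by (rule q_elim)
        have "(a \<otimes> s \<oplus> b \<otimes> s) \<otimes> y \<in> nilradical R" using HZ a b(1,2) y by simp
        moreover have "(a \<otimes> s \<oplus> b \<otimes> s) \<otimes> y = s \<otimes> ((a \<oplus> b) \<otimes> y)"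
          using a(1) b(1) y(1) sc by algebra
        ultimately have "s \<otimes> ((a \<oplus> b) \<otimes> y) \<in> nilradical R" by (simp only:)
        moreover have "(a \<oplus> b) \<otimes> y \<in> carrier R" using a(1) b(1) y(1) by simp
        ultimately have "(a \<oplus> b) \<otimes> y \<in> nilradical R"
          using reg_nil_cancel[OF a(2)] by blast
        then have "y \<in> nilradical R" using b(3) y(1) by blast
        then show "Z \<in> nilradical (q R)" using y by simp
      qed
    qed
  next
    assume H: "\<forall>X\<in>carrier (q R). \<exists>Y\<in>carrier (q R). X \<otimes>\<^bsub>q R\<^esub> Y \<in> nilradical (q R) \<and>
      (\<forall>Z\<in>carrier (q R). (X \<oplus>\<^bsub>q R\<^esub> Y) \<otimes>\<^bsub>q R\<^esub> Z \<in> nilradical (q R) \<longrightarrow> Z \<in> nilradical (q R))"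
    show "\<forall>a\<in>carrier R. \<exists>b\<in>carrier R. a \<otimes> b \<in> nilradical R \<and>
      (\<forall>y\<in>carrier R. (a \<oplus> b) \<otimes> y \<in> nilradical R \<longrightarrow> y \<in> nilradical R)"
    proof
      fix a assume a: "a \<in> carrier R"
      have X: "qclass R a \<one> \<in> carrier (q R)" using a by simp
      obtain Y where Y: "Y \<in> carrier (q R)" "qclass R a \<one> \<otimes>\<^bsub>q R\<^esub> Y \<in> nilradical (q R)"
        "\<And>Z. Z \<in> carrier (q R) \<Longrightarrow> (qclass R a \<one> \<oplus>\<^bsub>q R\<^esub> Y) \<otimes>\<^bsub>q R\<^esub> Z \<in> nilradical (q R)
           \<Longrightarrow> Z \<in> nilradical (q R)"
        using H X by blast
      obtain c t where c: "c \<in> carrier R" "t \<in> reg R" "Y = qclass R c t" using Y(1) by (rule q_elim)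
      have tc: "t \<in> carrier R" using c by simp
      have ac: "a \<otimes> c \<in> nilradical R" using Y(2) a c by simp
      show "\<exists>b\<in>carrier R. a \<otimes> b \<in> nilradical R \<and>
        (\<forall>y\<in>carrier R. (a \<oplus> b) \<otimes> y \<in> nilradical R \<longrightarrow> y \<in> nilradical R)"
      proof (intro bexI[of _ c] conjI ballI impI)
        show "c \<in> carrier R" "a \<otimes> c \<in> nilradical R" using c ac by simp_all
        fix y assume y: "y \<in> carrier R" and hy: "(a \<oplus> c) \<otimes> y \<in> nilradical R"
        have h1: "a \<otimes> ((a \<oplus> c) \<otimes> y) \<in> nilradical R" using hy a by (simp add: N.I_l_closed)
        have h2: "(a \<otimes> c) \<otimes> y \<in> nilradical R" using ac y by (simp add: N.I_r_closed)
        have "a \<otimes> a \<otimes> y = a \<otimes> ((a \<oplus> c) \<otimes> y) \<ominus> (a \<otimes> c) \<otimes> y"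
          using a c(1) y by algebra
        then have h3: "a \<otimes> a \<otimes> y \<in> nilradical R" using nil_minus[OF h1 h2] by (simp only:)
        have "(a \<otimes> y) \<otimes> (a \<otimes> y) = (a \<otimes> a \<otimes> y) \<otimes> y" using a y by algebra
        then have "(a \<otimes> y) \<otimes> (a \<otimes> y) \<in> nilradical R" using N.I_r_closed[OF h3 y] by (simp only:)
        then have h4: "a \<otimes> y \<in> nilradical R" by (rule nil_sq[OF m_closed[OF a y]])
        have "c \<otimes> y = (a \<oplus> c) \<otimes> y \<ominus> a \<otimes> y" using a c(1) y by algebra
        then have h5: "c \<otimes> y \<in> nilradical R" using nil_minus[OF hy h4] by (simp only:)
        have "(a \<otimes> t \<oplus> c \<otimes> \<one>) \<otimes> y = t \<otimes> (a \<otimes> y) \<oplus> c \<otimes> y" using a c(1) y tc by algebra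
        moreover have "t \<otimes> (a \<otimes> y) \<oplus> c \<otimes> y \<in> nilradical R"
          using N.a_closed[OF N.I_l_closed[OF h4 tc] h5] .
        ultimately have h6: "(a \<otimes> t \<oplus> c \<otimes> \<one>) \<otimes> y \<in> nilradical R" by (simp only:)
        have "(qclass R a \<one> \<oplus>\<^bsub>q R\<^esub> Y) \<otimes>\<^bsub>q R\<^esub> qclass R y \<one> \<in> nilradical (q R)"
          using a c y h6 by simp
        then have "qclass R y \<one> \<in> nilradical (q R)" using Y(3) y by simp
        then show "y \<in> nilradical R" using y by simp
      qed
    qed
  qed
qed

end

theorem mainTheorem6:
  fixes R :: "('a, 'b) ring_scheme"
  assumes "cring R"
  shows "almost_complemented R \<longleftrightarrow> almost_complemented (q R)"
  using assms by (rule cring.main_aux)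

end
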